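(* A nonnegative random variable $X$ with survival function $\overline{F}(x) = \mathbb{P}(X>x)$ is completely subscalable if and only if the function $h(x) := x \, \overline{F}(x)$ is increasing (non-decreasing) on $(0, \infty)$.
   Context: A nonnegative random variable $X$ with survival function $\overline{F}$ is called completely subscalable if $\theta \, \overline{F}(x) \leq \overline{F}(x/\theta)$ for all $x \geq 0$ and all $\theta \in (0,1)$. *)

theory Defs
  imports "HOL-Probability.Probability"
begin

definition survival :: "'a measure \<Rightarrow> ('a \<Rightarrow> real) \<Rightarrow> real \<Rightarrow> real" where
  "survival M X x = measure M {\<omega> \<in> space M. X \<omega> > x}"

definition completely_subscalable :: "'a measure \<Rightarrow> ('a \<Rightarrow> real) \<Rightarrow> bool" where
  "completely_subscalable M X \<longleftrightarrow>
     (\<forall>x::real. x \<ge> 0 \<longrightarrow> (\<forall>\<theta>::real. 0 < \<theta> \<and> \<theta> < 1 \<longrightarrow>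
        \<theta> * survival M X x \<le> survival M X (x / \<theta>)))"

end

theory Submission
  imports Defs
begin

theorem lemma6:
  fixes M :: "'a measure" and X :: "'a \<Rightarrow> real"
  assumes "prob_space M"
    and "X \<in> borel_measurable M"
    and "\<forall>\<omega>\<in>space M. X \<omega> \<ge> 0"
  shows "completely_subscalable M X \<longleftrightarrow>
         mono_on {0<..} (\<lambda>x::real. x * survival M X x)"
proof
  let ?F = "survival M X"
  have nn: "\<And>x. ?F x \<ge> 0" by (simp add: survival_def)
  assume cs: "completely_subscalable M X"
  show "mono_on {0<..} (\<lambda>x::real. x * ?F x)"
  proof (rule mono_onI)
    fix x y :: real assume x: "x \<in> {0<..}" and y: "y \<in> {0<..}" and xy: "x \<le> y"
    show "x * ?F x \<le> y * ?F y"
    proof (cases "x = y")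
      case True then show ?thesis by simp
    next
      case False
      define t where "t = x / y"
      have t: "0 < t" "t < 1" using x y xy False by (auto simp: t_def field_simps)
      have "t * ?F x \<le> ?F (x / t)" using cs t x unfolding completely_subscalable_def by auto
      moreover have "x / t = y" using x y by (simp add: t_def)
      ultimately have "t * ?F x \<le> ?F y" by simp
      hence "y * (t * ?F x) \<le> y * ?F y" using y by (simp add: mult_left_mono)
      moreover have "y * (t * ?F x) = x * ?F x" using y by (simp add: t_def)
      ultimately show ?thesis by simp
    qed
  qed
next
  let ?F = "survival M X"
  have nn: "\<And>x. ?F x \<ge> 0" by (simp add: survival_def)
  assume m: "mono_on {0<..} (\<lambda>x::real. x * ?F x)"
  show "completely_subscalable M X"
    unfolding completely_subscalable_def
  proof (intro allI impI)
    fix x t :: real assume x: "x \<ge> 0" and t: "0 < t \<and> t < 1"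
    show "t * ?F x \<le> ?F (x / t)"
    proof (cases "x = 0")
      case True
      then show ?thesis using t nn[of 0] by (simp add: mult_left_le_one_le)
    next
      case False
      define y where "y = x / t"
      have xy: "x \<le> y" "0 < y" using x t False by (auto simp: y_def field_simps)
      have "x * ?F x \<le> y * ?F y" using m xy x False by (auto intro: mono_onD)
      moreover have "x = t * y" using t by (simp add: y_def)
      ultimately have "y * (t * ?F x) \<le> y * ?F y" by (simp add: algebra_simps)
      hence "t * ?F x \<le> ?F y" using xy by simp
      thus ?thesis by (simp add: y_def)
    qed
  qed
qed

end
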